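(* Let $b_1,r_1,b_2,r_2$ be positive integers with $b_1r_2-b_2r_1=1$, and let $n>0$ be an integer which is not of the form $xr_1+yr_2$ for any integers $x,y>0$. Then there is no rational number of the form $\frac{b}{n}$ with $b$ an integer lying in the open interval $(\frac{b_2}{r_2},\frac{b_1}{r_1})$, and $$\Delta^n(b_1+b_2,r_1+r_2)=\Delta^n(b_1,r_1)+\Delta^n(b_2,r_2).$$
   Context: For positive integers $b,r$ and an integer $j\ge 1$, let $\overline{jb}$ denote the residue of $jb$ modulo $r$ in $\{0,\dots,r-1\}$, and define $$\overline{M}^j(b,r)=\frac{\overline{jb}\,(r-\overline{jb})}{2r},\qquad M^j(b,r)=\frac{jb\,(r-jb)}{2r},\qquad \Delta^j(b,r)=\overline{M}^j(b,r)-M^j(b,r).$$ *)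

theory Defs
  imports Complex_Main
begin

definition resid :: "int \<Rightarrow> int \<Rightarrow> int \<Rightarrow> int" where
  "resid j b r = (j * b) mod r"

definition Mbar :: "int \<Rightarrow> int \<Rightarrow> int \<Rightarrow> real" where
  "Mbar j b r = real_of_int (resid j b r * (r - resid j b r)) / (2 * real_of_int r)"

definition M :: "int \<Rightarrow> int \<Rightarrow> int \<Rightarrow> real" where
  "M j b r = real_of_int (j * b * (r - j * b)) / (2 * real_of_int r)"

definition Delta :: "int \<Rightarrow> int \<Rightarrow> int \<Rightarrow> real" where
  "Delta j b r = Mbar j b r - M j b r"

end

theory Submission
  imports Defs
begin

lemma key:
  fixes j b r q :: int
  assumes r: "r > 0" and l: "q*r \<le> j*b" and u: "j*b \<le> (q+1)*r"
  shows "Delta j b r = real_of_int (q*(2*(j*b) - (q+1)*r)) / 2"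
proof (cases "j*b = (q+1)*r")
  case True
  have "resid j b r = 0" unfolding resid_def True by simp
  then show ?thesis using r unfolding Delta_def Mbar_def M_def True
    by (simp add: field_simps)
next
  case False
  define s where "s = j*b - q*r"
  have s0: "0 \<le> s" "s < r" using l u False by (auto simp: s_def algebra_simps)
  have "resid j b r = s"
  proof -
    have "j*b = s + q*r" by (simp add: s_def)
    hence "(j*b) mod r = (s + q*r) mod r" by simp
    also have "\<dots> = s mod r" by simp
    also have "\<dots> = s" using s0 by simp
    finally show ?thesis by (simp add: resid_def)
  qed
  moreover have jb: "j*b = s + q*r" by (simp add: s_def)
  ultimately show ?thesis using r unfolding Delta_def Mbar_def M_def jb
    by (simp add: field_simps)
qed

theorem lemma2p2:
  fixes b1 r1 b2 r2 n :: int
  assumes "b1 > 0" "r1 > 0" "b2 > 0" "r2 > 0"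
    and "b1 * r2 - b2 * r1 = 1"
    and "n > 0"
    and "\<not> (\<exists>x y :: int. x > 0 \<and> y > 0 \<and> n = x * r1 + y * r2)"
  shows "\<not> (\<exists>b :: int. real_of_int b2 / real_of_int r2 < real_of_int b / real_of_int n
                      \<and> real_of_int b / real_of_int n < real_of_int b1 / real_of_int r1)
         \<and> Delta n (b1 + b2) (r1 + r2) = Delta n b1 r1 + Delta n b2 r2"
proof -
  have noint: "\<not> (b2*n < b*r2 \<and> b*r1 < b1*n)" for b
  proof
    assume h: "b2*n < b*r2 \<and> b*r1 < b1*n"
    define x where "x = b*r2 - b2*n"
    define y where "y = b1*n - b*r1"
    have "x > 0" "y > 0" using h by (auto simp: x_def y_def)
    moreover have "n = x*r1 + y*r2"
    proof -
      have "x*r1 + y*r2 = n*(b1*r2 - b2*r1)" by (simp add: x_def y_def algebra_simps)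
      thus ?thesis using assms(5) by simp
    qed
    ultimately show False using assms(7) by blast
  qed
  have P1: "\<not> (\<exists>b :: int. real_of_int b2 / real_of_int r2 < real_of_int b / real_of_int n
                      \<and> real_of_int b / real_of_int n < real_of_int b1 / real_of_int r1)"
  proof
    assume "\<exists>b :: int. real_of_int b2 / real_of_int r2 < real_of_int b / real_of_int n
                      \<and> real_of_int b / real_of_int n < real_of_int b1 / real_of_int r1"
    then obtain b :: int where h: "real_of_int b2 / real_of_int r2 < real_of_int b / real_of_int n"
      "real_of_int b / real_of_int n < real_of_int b1 / real_of_int r1" by blast
    have "real_of_int (b2*n) < real_of_int (b*r2)" "real_of_int (b*r1) < real_of_int (b1*n)"
      using h assms by (simp_all add: divide_simps mult.commute)
    hence "b2*n < b*r2 \<and> b*r1 < b1*n" by linarith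
    with noint show False by blast
  qed
  define q where "q = (n*b2) div r2"
  have dm: "n*b2 = r2*q + (n*b2) mod r2" unfolding q_def by simp
  have m0: "0 \<le> (n*b2) mod r2" "(n*b2) mod r2 < r2" using assms(4) by simp_all
  have q2l: "q*r2 \<le> n*b2" using dm m0 by (simp add: mult.commute)
  have q2u: "n*b2 \<le> (q+1)*r2" using dm m0 by (simp add: algebra_simps)
  have q1u: "n*b1 \<le> (q+1)*r1"
  proof -
    have "b2*n < (q+1)*r2" using dm m0 by (simp add: algebra_simps)
    thus ?thesis using noint[of "q+1"] by (auto simp: mult.commute)
  qed
  have q1l: "q*r1 \<le> n*b1"
  proof -
    have "r2*(n*b1) = n + r1*(n*b2)" using assms(5)
      by (metis add.commute diff_eq_eq distrib_left mult.left_commute mult.right_neutral)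
    moreover have "r1*(n*b2) \<ge> r1*(q*r2)" using q2l assms(2) by simp
    moreover have "n > 0" using assms by simp
    ultimately have "r2*(q*r1) < r2*(n*b1)" by (simp add: algebra_simps)
    hence "q*r1 < n*b1" using assms(4) by (simp add: mult_less_cancel_left)
    thus ?thesis by simp
  qed
  have D1: "Delta n b1 r1 = real_of_int (q*(2*(n*b1) - (q+1)*r1)) / 2"
    by (rule key) (use assms q1l q1u in auto)
  have D2: "Delta n b2 r2 = real_of_int (q*(2*(n*b2) - (q+1)*r2)) / 2"
    by (rule key) (use assms q2l q2u in auto)
  have D3: "Delta n (b1+b2) (r1+r2) = real_of_int (q*(2*(n*(b1+b2)) - (q+1)*(r1+r2))) / 2"
    by (rule key) (use assms q1l q1u q2l q2u in \<open>auto simp: algebra_simps\<close>)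
  have "Delta n (b1 + b2) (r1 + r2) = Delta n b1 r1 + Delta n b2 r2"
    unfolding D1 D2 D3 by (simp add: algebra_simps add_divide_distrib[symmetric])
  with P1 show ?thesis by blast
qed

end
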